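(* Let $\mathcal{A}$ be an Ershov $\mathcal{C}$-algebra. Then $\mathcal{A}$ is equationally Noetherian if and only if the subalgebra $\mathcal{C}$ is finite.
   Context: An Ershov algebra is a structure $\langle A; \vee, \wedge, \setminus, 0\rangle$ such that $\langle A;\vee,\wedge\rangle$ is a distributive lattice with least element $0$, and $b \setminus a$ is the relative complement: the unique $z$ with $z \wedge a = 0$ and $z \vee a = a \vee b$. An Ershov $\mathcal{C}$-algebra is an Ershov algebra $\mathcal{A}$ together with a distinguished subalgebra $\mathcal{C}$ whose elements are added as constant symbols; $\mathcal{L}$ is the language $\{\vee,\wedge,\setminus,0\}$ plus these constants. An equation in variables $\bar{x}=(x_1,\dots,x_n)$ is $t(\bar x)=s(\bar x)$ with $t,s$ terms of $\mathcal{L}$; a system of equations is any (possibly infinite) set of such equations, and its solution set is the set of tuples in $A^n$ satisfying all of them. $\mathcal{A}$ is equationally Noetherian if for every $n$ every system of equations in $n$ variables is equivalent over $\mathcal{A}$ (has the same solution set) to some finite subsystem of it. *)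

theory Defs
  imports Main
begin

text \<open>An Ershov algebra with carrier the whole type 'a, given by its operations
  join (sup), meet (inf), relative complement (diff, b \ a = diff b a) and 0.\<close>

definition ershov_algebra ::
  "('a \<Rightarrow> 'a \<Rightarrow> 'a) \<Rightarrow> ('a \<Rightarrow> 'a \<Rightarrow> 'a) \<Rightarrow> ('a \<Rightarrow> 'a \<Rightarrow> 'a) \<Rightarrow> 'a \<Rightarrow> bool" where
  "ershov_algebra jn mt df z \<longleftrightarrow>
     (\<forall>x y w. jn (jn x y) w = jn x (jn y w)) \<and>
     (\<forall>x y w. mt (mt x y) w = mt x (mt y w)) \<and>
     (\<forall>x y. jn x y = jn y x) \<and>
     (\<forall>x y. mt x y = mt y x) \<and>
     (\<forall>x y. jn x (mt x y) = x) \<and>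
     (\<forall>x y. mt x (jn x y) = x) \<and>
     (\<forall>x y w. mt x (jn y w) = jn (mt x y) (mt x w)) \<and>
     (\<forall>x. jn z x = x) \<and>
     (\<forall>a b. mt (df b a) a = z \<and> jn (df b a) a = jn a b \<and>
            (\<forall>w. mt w a = z \<and> jn w a = jn a b \<longrightarrow> w = df b a))"

definition ershov_subalgebra ::
  "('a \<Rightarrow> 'a \<Rightarrow> 'a) \<Rightarrow> ('a \<Rightarrow> 'a \<Rightarrow> 'a) \<Rightarrow> ('a \<Rightarrow> 'a \<Rightarrow> 'a) \<Rightarrow> 'a \<Rightarrow> 'a set \<Rightarrow> bool" where
  "ershov_subalgebra jn mt df z C \<longleftrightarrow>
     z \<in> C \<and> (\<forall>x\<in>C. \<forall>y\<in>C. jn x y \<in> C \<and> mt x y \<in> C \<and> df x y \<in> C)"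

datatype 'a trm = Var nat | Cst 'a | Zero | Jn "'a trm" "'a trm" | Mt "'a trm" "'a trm"
  | Df "'a trm" "'a trm"

fun eval_trm ::
  "('a \<Rightarrow> 'a \<Rightarrow> 'a) \<Rightarrow> ('a \<Rightarrow> 'a \<Rightarrow> 'a) \<Rightarrow> ('a \<Rightarrow> 'a \<Rightarrow> 'a) \<Rightarrow> 'a \<Rightarrow> 'a list \<Rightarrow> 'a trm \<Rightarrow> 'a" where
  "eval_trm jn mt df z xs (Var i) = xs ! i"
| "eval_trm jn mt df z xs (Cst c) = c"
| "eval_trm jn mt df z xs Zero = z"
| "eval_trm jn mt df z xs (Jn t s) = jn (eval_trm jn mt df z xs t) (eval_trm jn mt df z xs s)"
| "eval_trm jn mt df z xs (Mt t s) = mt (eval_trm jn mt df z xs t) (eval_trm jn mt df z xs s)"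
| "eval_trm jn mt df z xs (Df t s) = df (eval_trm jn mt df z xs t) (eval_trm jn mt df z xs s)"

fun wf_trm :: "'a set \<Rightarrow> nat \<Rightarrow> 'a trm \<Rightarrow> bool" where
  "wf_trm C n (Var i) = (i < n)"
| "wf_trm C n (Cst c) = (c \<in> C)"
| "wf_trm C n Zero = True"
| "wf_trm C n (Jn t s) = (wf_trm C n t \<and> wf_trm C n s)"
| "wf_trm C n (Mt t s) = (wf_trm C n t \<and> wf_trm C n s)"
| "wf_trm C n (Df t s) = (wf_trm C n t \<and> wf_trm C n s)"

definition sol_set ::
  "('a \<Rightarrow> 'a \<Rightarrow> 'a) \<Rightarrow> ('a \<Rightarrow> 'a \<Rightarrow> 'a) \<Rightarrow> ('a \<Rightarrow> 'a \<Rightarrow> 'a) \<Rightarrow> 'a \<Rightarrow> nat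
    \<Rightarrow> ('a trm \<times> 'a trm) set \<Rightarrow> 'a list set" where
  "sol_set jn mt df z n S =
     {xs. length xs = n \<and> (\<forall>(t, s)\<in>S. eval_trm jn mt df z xs t = eval_trm jn mt df z xs s)}"

definition equationally_noetherian ::
  "('a \<Rightarrow> 'a \<Rightarrow> 'a) \<Rightarrow> ('a \<Rightarrow> 'a \<Rightarrow> 'a) \<Rightarrow> ('a \<Rightarrow> 'a \<Rightarrow> 'a) \<Rightarrow> 'a \<Rightarrow> 'a set \<Rightarrow> bool" where
  "equationally_noetherian jn mt df z C \<longleftrightarrow>
     (\<forall>n S. (\<forall>(t, s)\<in>S. wf_trm C n t \<and> wf_trm C n s) \<longrightarrow>
        (\<exists>S0. S0 \<subseteq> S \<and> finite S0 \<and> sol_set jn mt df z n S0 = sol_set jn mt df z n S))"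

end

theory Submission
  imports Defs "HOL-Library.FuncSet"
begin

fun beval :: "(nat \<Rightarrow> bool) \<Rightarrow> ('a \<Rightarrow> bool) \<Rightarrow> 'a trm \<Rightarrow> bool" where
  "beval \<rho> \<sigma> (Var i) = \<rho> i"
| "beval \<rho> \<sigma> (Cst c) = \<sigma> c"
| "beval \<rho> \<sigma> Zero = False"
| "beval \<rho> \<sigma> (Jn t s) = (beval \<rho> \<sigma> t \<or> beval \<rho> \<sigma> s)"
| "beval \<rho> \<sigma> (Mt t s) = (beval \<rho> \<sigma> t \<and> beval \<rho> \<sigma> s)"
| "beval \<rho> \<sigma> (Df t s) = (beval \<rho> \<sigma> t \<and> \<not> beval \<rho> \<sigma> s)"

lemma beval_cong: "wf_trm C n t \<Longrightarrow> (\<forall>i<n. \<rho> i = \<rho>' i) \<Longrightarrow> (\<forall>c\<in>C. \<sigma> c = \<sigma>' c)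
  \<Longrightarrow> beval \<rho> \<sigma> t = beval \<rho>' \<sigma>' t"
  by (induction t) auto

definition sg :: "'a set \<Rightarrow> nat \<Rightarrow> 'a trm \<Rightarrow> nat set \<times> 'a set \<Rightarrow> bool" where
  "sg C n t = restrict (\<lambda>PQ. beval (\<lambda>i. i \<in> fst PQ) (\<lambda>c. c \<in> snd PQ) t) (Pow {..<n} \<times> Pow C)"

lemma val_sg: "wf_trm C n t \<Longrightarrow>
  beval \<rho> \<sigma> t = sg C n t ({i. i < n \<and> \<rho> i}, {c\<in>C. \<sigma> c})"
proof -
  assume w: "wf_trm C n t"
  have "({i. i < n \<and> \<rho> i}, {c\<in>C. \<sigma> c}) \<in> Pow {..<n} \<times> Pow C" by auto
  then have "sg C n t ({i. i < n \<and> \<rho> i}, {c\<in>C. \<sigma> c}) = beval (\<lambda>i. i < n \<and> \<rho> i) (\<lambda>c. c \<in> C \<and> \<sigma> c) t"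
    unfolding sg_def by simp
  also have "\<dots> = beval \<rho> \<sigma> t" by (rule beval_cong[OF w]) auto
  finally show ?thesis by simp
qed

lemma sg_in: "sg C n t \<in> Pi\<^sub>E (Pow {..<n} \<times> Pow C) (\<lambda>_. UNIV)"
  unfolding sg_def by (simp add: restrict_PiE_iff)

locale ersh =
  fixes jn mt df :: "'a \<Rightarrow> 'a \<Rightarrow> 'a" and z :: 'a
  assumes jA: "jn (jn x y) w = jn x (jn y w)"
    and mA: "mt (mt x y) w = mt x (mt y w)"
    and jC: "jn x y = jn y x"
    and mC: "mt x y = mt y x"
    and ab1: "jn x (mt x y) = x"
    and ab2: "mt x (jn x y) = x"
    and dist: "mt x (jn y w) = jn (mt x y) (mt x w)"
    and jz: "jn z x = x"
    and d1: "mt (df b a) a = z"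
    and d2: "jn (df b a) a = jn a b"
begin

definition lq where "lq x y \<longleftrightarrow> mt x y = x"

lemma mLC: "mt x (mt y w) = mt y (mt x w)" by (metis mA mC)
lemma mt_idem: "mt x x = x" by (metis ab1 ab2)
lemma lq_refl: "lq x x" unfolding lq_def by (rule mt_idem)
lemma lq_trans: "lq x y \<Longrightarrow> lq y w \<Longrightarrow> lq x w" unfolding lq_def by (metis mA)
lemma lq_antisym: "lq x y \<Longrightarrow> lq y x \<Longrightarrow> x = y" unfolding lq_def by (metis mC)
lemma lq_jn1: "lq x (jn x y)" unfolding lq_def by (rule ab2)
lemma lq_jn2: "lq y (jn x y)" using lq_jn1 jC by metis
lemma lq_mt1: "lq (mt x y) x" unfolding lq_def by (metis mA mC mt_idem)
lemma lq_mt2: "lq (mt x y) y" using lq_mt1 mC by metis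
lemma lq_mono: "lq x x' \<Longrightarrow> lq y y' \<Longrightarrow> lq (mt x y) (mt x' y')"
  unfolding lq_def
proof -
  assume a: "mt x x' = x" "mt y y' = y"
  have "mt (mt x y) (mt x' y') = mt (mt x x') (mt y y')" by (simp add: mA mC mLC)
  then show "mt (mt x y) (mt x' y') = mt x y" using a by simp
qed
lemma lq_glb: "lq w x \<Longrightarrow> lq w y \<Longrightarrow> lq w (mt x y)" unfolding lq_def by (metis mA)
lemma lq_lub: "lq x b \<Longrightarrow> lq y b \<Longrightarrow> lq (jn x y) b" unfolding lq_def by (metis mC dist)
lemma lq_z: "lq z x" unfolding lq_def by (metis jz ab2)
lemma df_lq: "lq (df x y) x"
proof -
  let ?d = "df x y"
  have "mt ?d (jn y x) = mt ?d (jn ?d y)" by (simp add: d2)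
  also have "\<dots> = ?d" by (rule ab2)
  finally have e1: "mt ?d (jn y x) = ?d" .
  have "mt ?d (jn y x) = jn (mt ?d y) (mt ?d x)" by (rule dist)
  also have "\<dots> = mt ?d x" by (simp add: d1 jz)
  finally show ?thesis unfolding lq_def using e1 by simp
qed

definition filt where
  "filt F \<longleftrightarrow> (\<forall>x\<in>F. \<forall>y\<in>F. mt x y \<in> F) \<and> (\<forall>x\<in>F. \<forall>y. lq x y \<longrightarrow> y \<in> F)"

lemma prime_filter_exists:
  assumes nab: "\<not> lq a b"
  shows "\<exists>M. filt M \<and> a \<in> M \<and> b \<notin> M \<and> (\<forall>x y. jn x y \<in> M \<longrightarrow> x \<in> M \<or> y \<in> M)"
proof -
  let ?A = "{F. filt F \<and> a \<in> F \<and> b \<notin> F}"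
  have up: "{y. lq a y} \<in> ?A"
    using nab lq_refl lq_glb lq_trans unfolding filt_def by blast
  have "\<forall>Ch\<in>chains ?A. \<exists>U\<in>?A. \<forall>X\<in>Ch. X \<subseteq> U"
  proof
    fix Ch assume Ch: "Ch \<in> chains ?A"
    show "\<exists>U\<in>?A. \<forall>X\<in>Ch. X \<subseteq> U"
    proof (cases "Ch = {}")
      case True then show ?thesis using up by blast
    next
      case False
      have sub: "Ch \<subseteq> ?A" and ch: "\<forall>X\<in>Ch. \<forall>Y\<in>Ch. X \<subseteq> Y \<or> Y \<subseteq> X"
        using Ch unfolding chains_def chain_subset_def by auto
      have "filt (\<Union>Ch)" unfolding filt_def
      proof (intro conjI ballI allI impI)
        fix x y assume "x \<in> \<Union>Ch" "y \<in> \<Union>Ch"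
        then obtain X Y where XY: "X \<in> Ch" "Y \<in> Ch" "x \<in> X" "y \<in> Y" by blast
        show "mt x y \<in> \<Union>Ch"
        proof (cases "X \<subseteq> Y")
          case True
          then have "mt x y \<in> Y" using XY sub unfolding filt_def by blast
          then show ?thesis using XY by blast
        next
          case False
          then have "Y \<subseteq> X" using ch XY by blast
          then have "mt x y \<in> X" using XY sub unfolding filt_def by blast
          then show ?thesis using XY by blast
        qed
      next
        fix x y assume "x \<in> \<Union>Ch" "lq x y"
        then show "y \<in> \<Union>Ch" using sub unfolding filt_def by blast
      qed
      moreover have "a \<in> \<Union>Ch" using False sub by blast
      moreover have "b \<notin> \<Union>Ch" using sub by blast
      ultimately show ?thesis by blast
    qed
  qed
  from Zorn_Lemma2[OF this] obtain M where M: "M \<in> ?A" and mx: "\<forall>X\<in>?A. M \<subseteq> X \<longrightarrow> X = M"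
    by blast
  have ext: "\<exists>f\<in>M. lq (mt f x) b" if xM: "x \<notin> M" for x
  proof (rule ccontr)
    assume nb: "\<not> (\<exists>f\<in>M. lq (mt f x) b)"
    let ?Mx = "{w. \<exists>f\<in>M. lq (mt f x) w}"
    have "filt ?Mx" unfolding filt_def
    proof (intro conjI ballI allI impI)
      fix w1 w2 assume "w1 \<in> ?Mx" "w2 \<in> ?Mx"
      then obtain f1 f2 where f: "f1 \<in> M" "f2 \<in> M" "lq (mt f1 x) w1" "lq (mt f2 x) w2" by blast
      have "mt f1 f2 \<in> M" using f M unfolding filt_def by blast
      moreover have "lq (mt (mt f1 f2) x) (mt w1 w2)"
      proof (rule lq_glb)
        show "lq (mt (mt f1 f2) x) w1"
          using lq_trans[OF lq_mono[OF lq_mt1 lq_refl] f(3)] .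
        show "lq (mt (mt f1 f2) x) w2"
          using lq_trans[OF lq_mono[OF lq_mt2 lq_refl] f(4)] .
      qed
      ultimately show "mt w1 w2 \<in> ?Mx" by blast
    next
      fix w y assume "w \<in> ?Mx" "lq w y"
      then show "y \<in> ?Mx" using lq_trans by blast
    qed
    moreover have "a \<in> ?Mx" using M lq_mt1 by blast
    ultimately have "?Mx \<in> ?A" using nb by blast
    moreover have "M \<subseteq> ?Mx" using lq_mt1 by blast
    ultimately have "?Mx = M" using mx by blast
    moreover have "x \<in> ?Mx" using M lq_mt2 by blast
    ultimately show False using xM by blast
  qed
  have prime: "x \<in> M \<or> y \<in> M" if j: "jn x y \<in> M" for x y
  proof (rule ccontr)
    assume "\<not> (x \<in> M \<or> y \<in> M)"
    then obtain f g where fg: "f \<in> M" "g \<in> M" "lq (mt f x) b" "lq (mt g y) b"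
      using ext by blast
    let ?h = "mt f g"
    have hM: "?h \<in> M" using fg M unfolding filt_def by blast
    have "mt ?h (jn x y) \<in> M" using hM j M unfolding filt_def by blast
    moreover have "lq (mt ?h (jn x y)) b"
    proof -
      have "mt ?h (jn x y) = jn (mt ?h x) (mt ?h y)" by (rule dist)
      moreover have "lq (mt ?h x) b"
        using lq_trans[OF lq_mono[OF lq_mt1 lq_refl] fg(3)] .
      moreover have "lq (mt ?h y) b"
        using lq_trans[OF lq_mono[OF lq_mt2 lq_refl] fg(4)] .
      ultimately show ?thesis using lq_lub by simp
    qed
    ultimately have "b \<in> M" using M unfolding filt_def by blast
    then show False using M by blast
  qed
  show ?thesis using M prime by blast
qed

definition hom :: "('a \<Rightarrow> bool) \<Rightarrow> bool" where
  "hom h \<longleftrightarrow> (\<forall>x y. h (jn x y) = (h x \<or> h y)) \<and> (\<forall>x y. h (mt x y) = (h x \<and> h y))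
     \<and> (\<forall>x y. h (df x y) = (h x \<and> \<not> h y)) \<and> \<not> h z"

lemma separate1:
  assumes "\<not> lq a b" shows "\<exists>h. hom h \<and> h a \<noteq> h b"
proof -
  obtain M where M: "filt M" "a \<in> M" "b \<notin> M" and pr: "\<forall>x y. jn x y \<in> M \<longrightarrow> x \<in> M \<or> y \<in> M"
    using prime_filter_exists assms by blast
  have up: "x \<in> M \<Longrightarrow> lq x y \<Longrightarrow> y \<in> M" for x y using M(1) unfolding filt_def by blast
  have zM: "z \<notin> M" using up lq_z M(3) by blast
  have "hom (\<lambda>w. w \<in> M)" unfolding hom_def
  proof (intro conjI allI notI)
    fix x y show "(jn x y \<in> M) = (x \<in> M \<or> y \<in> M)" using pr up lq_jn1 lq_jn2 by blast
  next
    fix x y show "(mt x y \<in> M) = (x \<in> M \<and> y \<in> M)" using M(1) up lq_mt1 lq_mt2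
      unfolding filt_def by blast
  next
    fix x y show "(df x y \<in> M) = (x \<in> M \<and> y \<notin> M)"
    proof
      assume d: "df x y \<in> M"
      have "x \<in> M" using up[OF d df_lq] .
      moreover have "y \<notin> M"
      proof
        assume "y \<in> M"
        then have "mt (df x y) y \<in> M" using d M(1) unfolding filt_def by blast
        then show False using d1 zM by simp
      qed
      ultimately show "x \<in> M \<and> y \<notin> M" by blast
    next
      assume xy: "x \<in> M \<and> y \<notin> M"
      then have "jn y x \<in> M" using up lq_jn2 by blast
      then have "jn (df x y) y \<in> M" by (simp add: d2)
      then show "df x y \<in> M" using pr xy by blast
    qed
  next
    assume "z \<in> M" then show False using zM by blast
  qed
  then show ?thesis using M by blast
qed

lemma separate: "a \<noteq> b \<Longrightarrow> \<exists>h. hom h \<and> h a \<noteq> h b"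
  using separate1 lq_antisym by metis


lemma hom_eval: "hom h \<Longrightarrow> h (eval_trm jn mt df z xs t) = beval (\<lambda>i. h (xs ! i)) h t"
  by (induction t) (auto simp: hom_def)


definition sol1 :: "nat \<Rightarrow> 'a trm \<times> 'a trm \<Rightarrow> 'a list set" where
  "sol1 n e = {xs. length xs = n \<and> eval_trm jn mt df z xs (fst e) = eval_trm jn mt df z xs (snd e)}"

lemma sol_set_eq: "sol_set jn mt df z n S = {xs. length xs = n \<and> (\<forall>e\<in>S. xs \<in> sol1 n e)}"
  unfolding sol_set_def sol1_def by auto

lemma sol1_key:
  assumes wt: "wf_trm C n t" and ws: "wf_trm C n s"
  shows "sol1 n (t, s) = {xs. length xs = n \<and> (\<forall>h. hom h \<longrightarrow>
     sg C n t ({i. i < n \<and> h (xs ! i)}, {c\<in>C. h c}) = sg C n s ({i. i < n \<and> h (xs ! i)}, {c\<in>C. h c}))}"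
proof -
  have "eval_trm jn mt df z xs t = eval_trm jn mt df z xs s \<longleftrightarrow>
     (\<forall>h. hom h \<longrightarrow> sg C n t ({i. i < n \<and> h (xs ! i)}, {c\<in>C. h c}) = sg C n s ({i. i < n \<and> h (xs ! i)}, {c\<in>C. h c}))"
    for xs
  proof -
    have "eval_trm jn mt df z xs t = eval_trm jn mt df z xs s \<longleftrightarrow>
      (\<forall>h. hom h \<longrightarrow> h (eval_trm jn mt df z xs t) = h (eval_trm jn mt df z xs s))"
      using separate[of "eval_trm jn mt df z xs t" "eval_trm jn mt df z xs s"] by auto
    also have "\<dots> \<longleftrightarrow> (\<forall>h. hom h \<longrightarrow> beval (\<lambda>i. h (xs ! i)) h t = beval (\<lambda>i. h (xs ! i)) h s)"
      using hom_eval by simp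
    also have "\<dots> \<longleftrightarrow> (\<forall>h. hom h \<longrightarrow> sg C n t ({i. i < n \<and> h (xs ! i)}, {c\<in>C. h c}) = sg C n s ({i. i < n \<and> h (xs ! i)}, {c\<in>C. h c}))"
      using val_sg[OF wt] val_sg[OF ws] by simp
    finally show ?thesis .
  qed
  then show ?thesis unfolding sol1_def by auto
qed

lemma finite_en:
  assumes fin: "finite C"
  shows "equationally_noetherian jn mt df z C"
  unfolding equationally_noetherian_def
proof (intro allI impI)
  fix n S assume wf: "\<forall>(t, s)\<in>S. wf_trm C n t \<and> wf_trm C n s"
  define key where "key e = (sg C n (fst e), sg C n (snd e))" for e
  define G where "G (p :: (nat set \<times> 'a set \<Rightarrow> bool) \<times> (nat set \<times> 'a set \<Rightarrow> bool)) = {xs. length xs = n \<and> (\<forall>h. hom h \<longrightarrow>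
     fst p ({i. i < n \<and> h (xs ! i)}, {c\<in>C. h c}) = snd p ({i. i < n \<and> h (xs ! i)}, {c\<in>C. h c}))}" for p
  have solG: "sol1 n e = G (key e)" if "e \<in> S" for e
  proof -
    obtain t s where e: "e = (t, s)" by fastforce
    show ?thesis using wf that sol1_key[of C n t s] unfolding e key_def G_def by auto
  qed
  define D where "D = Pow {..<n} \<times> Pow C"
  have "key ` S \<subseteq> Pi\<^sub>E D (\<lambda>_. UNIV) \<times> Pi\<^sub>E D (\<lambda>_. UNIV)"
    unfolding key_def D_def by (intro image_subsetI SigmaI sg_in)
  moreover have "finite (Pi\<^sub>E D (\<lambda>_. UNIV :: bool set))"
    by (rule finite_PiE) (auto simp: D_def fin)
  ultimately have "finite (key ` S)" by (meson finite_SigmaI finite_subset)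
  moreover have "sol1 n ` S \<subseteq> G ` key ` S" using solG by auto
  ultimately have fin1: "finite (sol1 n ` S)" by (meson finite_imageI finite_subset)
  define S0 where "S0 = (\<lambda>X. SOME e. e \<in> S \<and> sol1 n e = X) ` (sol1 n ` S)"
  have some: "(SOME e'. e' \<in> S \<and> sol1 n e' = sol1 n e) \<in> S \<and>
      sol1 n (SOME e'. e' \<in> S \<and> sol1 n e' = sol1 n e) = sol1 n e" if "e \<in> S" for e
    by (rule someI_ex) (use that in blast)
  have "S0 \<subseteq> S" unfolding S0_def using some by auto
  moreover have "finite S0" unfolding S0_def using fin1 by simp
  moreover have "sol_set jn mt df z n S0 = sol_set jn mt df z n S"
  proof
    show "sol_set jn mt df z n S \<subseteq> sol_set jn mt df z n S0"
      using \<open>S0 \<subseteq> S\<close> unfolding sol_set_eq by auto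
  next
    show "sol_set jn mt df z n S0 \<subseteq> sol_set jn mt df z n S"
    proof
      fix xs assume xs: "xs \<in> sol_set jn mt df z n S0"
      have "xs \<in> sol1 n e" if e: "e \<in> S" for e
      proof -
        let ?e = "SOME e'. e' \<in> S \<and> sol1 n e' = sol1 n e"
        have "?e \<in> S0" unfolding S0_def using e by blast
        then have "xs \<in> sol1 n ?e" using xs unfolding sol_set_eq by blast
        then show ?thesis using some[OF e] by simp
      qed
      then show "xs \<in> sol_set jn mt df z n S" using xs unfolding sol_set_eq by blast
    qed
  qed
  ultimately show "\<exists>S0\<subseteq>S. finite S0 \<and> sol_set jn mt df z n S0 = sol_set jn mt df z n S"
    by blast
qed

lemma ub_exists:
  assumes sub: "ershov_subalgebra jn mt df z C"
  shows "finite D \<Longrightarrow> D \<subseteq> C \<Longrightarrow> \<exists>u\<in>C. \<forall>c\<in>D. lq c u"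
proof (induction D rule: finite_induct)
  case empty then show ?case using sub unfolding ershov_subalgebra_def by blast
next
  case (insert c D)
  then obtain u where u: "u \<in> C" "\<forall>d\<in>D. lq d u" by blast
  have "jn c u \<in> C" using sub u insert.prems unfolding ershov_subalgebra_def by blast
  moreover have "\<forall>d\<in>insert c D. lq d (jn c u)" using u lq_jn1 lq_jn2 lq_trans by blast
  ultimately show ?case by blast
qed

lemma decomp: "lq x u \<Longrightarrow> jn (mt x v) (mt x (df u v)) = x"
proof -
  assume "lq x u"
  then have xu: "mt x u = x" unfolding lq_def .
  have "jn (mt x v) (mt x (df u v)) = mt x (jn v (df u v))" by (simp add: dist)
  also have "\<dots> = mt x (jn (df u v) v)" by (simp add: jC)
  also have "\<dots> = mt x (jn v u)" by (simp add: d2)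
  also have "\<dots> = jn (mt x v) x" by (simp add: dist xu)
  also have "\<dots> = x" by (simp add: jC ab1)
  finally show ?thesis .
qed

lemma en_finite:
  assumes sub: "ershov_subalgebra jn mt df z C"
    and en: "equationally_noetherian jn mt df z C"
  shows "finite C"
proof -
  have cl: "x \<in> C \<Longrightarrow> y \<in> C \<Longrightarrow> jn x y \<in> C \<and> mt x y \<in> C \<and> df x y \<in> C" for x y
    using sub unfolding ershov_subalgebra_def by blast
  have zC: "z \<in> C" using sub unfolding ershov_subalgebra_def by blast
  have enS: "\<exists>S0\<subseteq>S. finite S0 \<and> sol_set jn mt df z n S0 = sol_set jn mt df z n S"
    if "\<forall>(t, s)\<in>S. wf_trm C n t \<and> wf_trm C n s" for n S
    using en that unfolding equationally_noetherian_def by blast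
  obtain u where uC: "u \<in> C" and utop: "\<forall>c\<in>C. lq c u"
  proof -
    let ?g = "\<lambda>c. (Mt (Cst c) (Var 0), Cst c)"
    have "\<forall>(t, s)\<in>?g ` C. wf_trm C 1 t \<and> wf_trm C 1 s" by auto
    from enS[OF this] obtain S0 where S0: "S0 \<subseteq> ?g ` C" "finite S0"
      "sol_set jn mt df z 1 S0 = sol_set jn mt df z 1 (?g ` C)"
      by blast
    obtain D0 where D0: "D0 \<subseteq> C" "finite D0" "S0 = ?g ` D0"
      using finite_subset_image[OF S0(2) S0(1)] by blast
    obtain u where u: "u \<in> C" "\<forall>c\<in>D0. lq c u" using ub_exists[OF sub D0(2) D0(1)] by blast
    have "[u] \<in> sol_set jn mt df z 1 S0"
      using u(2) unfolding D0(3) sol_set_def lq_def by auto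
    then have "[u] \<in> sol_set jn mt df z 1 (?g ` C)" using S0(3) by simp
    then have "\<forall>c\<in>C. lq c u" unfolding sol_set_def lq_def by auto
    then show ?thesis using that u(1) by blast
  qed
  define R where "R = {(x, y). x \<in> C \<and> y \<in> C \<and> lq x y \<and> x \<noteq> y}"
  have "wf R" unfolding wf_iff_no_infinite_down_chain
  proof
    assume "\<exists>f. \<forall>i. (f (Suc i), f i) \<in> R"
    then obtain f where f: "\<And>i. (f (Suc i), f i) \<in> R" by blast
    have fC: "f i \<in> C" for i using f[of i] unfolding R_def by auto
    have dec: "i \<le> k \<Longrightarrow> lq (f k) (f i)" for i k
    proof (induction k)
      case 0 then show ?case using lq_refl by simp
    next
      case (Suc k)
      show ?case
      proof (cases "i = Suc k")
        case True then show ?thesis using lq_refl by simp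
      next
        case False
        then have "lq (f k) (f i)" using Suc by simp
        moreover have "lq (f (Suc k)) (f k)" using f[of k] unfolding R_def by auto
        ultimately show ?thesis using lq_trans by blast
      qed
    qed
    let ?g = "\<lambda>i. (Mt (Var 0) (Cst (f i)), Var 0)"
    have "\<forall>(t, s)\<in>?g ` UNIV. wf_trm C 1 t \<and> wf_trm C 1 s" using fC by auto
    from enS[OF this] obtain S0 where S0: "S0 \<subseteq> ?g ` UNIV" "finite S0"
      "sol_set jn mt df z 1 S0 = sol_set jn mt df z 1 (?g ` UNIV)"
      by blast
    obtain I where I: "finite I" "S0 = ?g ` I"
      using finite_subset_image[OF S0(2) S0(1)] by blast
    define k where "k = Max (insert 0 I)"
    have ik: "i \<in> I \<Longrightarrow> i \<le> k" for i unfolding k_def using I(1) by simp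
    have "[f k] \<in> sol_set jn mt df z 1 S0"
      using dec ik unfolding I(2) sol_set_def lq_def by auto
    then have "[f k] \<in> sol_set jn mt df z 1 (?g ` UNIV)" using S0(3) by simp
    then have "lq (f k) (f (Suc k))" unfolding sol_set_def lq_def by auto
    moreover have "lq (f (Suc k)) (f k)" "f (Suc k) \<noteq> f k" using f[of k] unfolding R_def by auto
    ultimately show False using lq_antisym by metis
  qed
  have fin: "u \<in> C \<longrightarrow> finite {x\<in>C. lq x u}" for u
    using \<open>wf R\<close>
  proof (induction u rule: wf_induct_rule)
    case (less u)
    show ?case
    proof
      assume uC: "u \<in> C"
      show "finite {x\<in>C. lq x u}"
      proof (cases "\<exists>v\<in>C. lq v u \<and> v \<noteq> u \<and> v \<noteq> z")
        case True
        then obtain v where v: "v \<in> C" "lq v u" "v \<noteq> u" "v \<noteq> z" by blast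
        define w where "w = df u v"
        have wC: "w \<in> C" using cl[OF uC v(1)] unfolding w_def by blast
        have wu: "lq w u" unfolding w_def by (rule df_lq)
        have "w \<noteq> u"
        proof
          assume "w = u"
          then have "mt u v = z" using d1[of u v] unfolding w_def by simp
          moreover have "mt u v = v" using v(2) mC unfolding lq_def by metis
          ultimately show False using v(4) by simp
        qed
        have fv: "finite {x\<in>C. lq x v}" using less.IH[of v] v uC unfolding R_def by blast
        have fw: "finite {x\<in>C. lq x w}" using less.IH[of w] wC wu \<open>w \<noteq> u\<close> uC unfolding R_def by blast
        have "{x\<in>C. lq x u} \<subseteq> (\<lambda>(p, q). jn p q) ` ({x\<in>C. lq x v} \<times> {x\<in>C. lq x w})"
        proof
          fix x assume x: "x \<in> {x\<in>C. lq x u}"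
          then have "x = jn (mt x v) (mt x w)" using decomp unfolding w_def by auto
          moreover have "mt x v \<in> C" "mt x w \<in> C" using cl x v(1) wC by auto
          moreover have "lq (mt x v) v" "lq (mt x w) w" using lq_mt2 by auto
          ultimately show "x \<in> (\<lambda>(p, q). jn p q) ` ({x\<in>C. lq x v} \<times> {x\<in>C. lq x w})" by force
        qed
        then show ?thesis using fv fw by (meson finite_SigmaI finite_imageI finite_subset)
      next
        case False
        then have "{x\<in>C. lq x u} \<subseteq> {z, u}" by auto
        then show ?thesis by (rule finite_subset) simp
      qed
    qed
  qed
  have "C \<subseteq> {x\<in>C. lq x u}" using utop by auto
  then show ?thesis using fin uC by (meson finite_subset)
qed

end

theorem mainTheorem4:
  fixes jn mt df :: "'a \<Rightarrow> 'a \<Rightarrow> 'a" and z :: 'a and C :: "'a set"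
  assumes "ershov_algebra jn mt df z"
    and "ershov_subalgebra jn mt df z C"
  shows "equationally_noetherian jn mt df z C \<longleftrightarrow> finite C"
proof -
  have "ersh jn mt df z" using assms(1) unfolding ershov_algebra_def
    by (elim conjE, unfold_locales) meson+
  then interpret ersh jn mt df z .
  show ?thesis using en_finite[OF assms(2)] finite_en by blast
qed

end
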